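(* Suppose a randomized learning algorithm $A$ is $\beta$-pointwise hypothesis stable with respect to an $M$-bounded loss $\ell$ and a fixed prior $P$ on $\Theta$. Then for any $n\ge1$ and $\delta\in(0,1)$, with probability at least $1-\delta$ over draws of $S\sim\mathcal{D}^n$, every posterior $Q$ on $\Theta$ satisfies $$\Phi(S,Q)\le\sqrt{\Big(\frac{\chi^2(Q\|P)+1}{\delta}\Big)\Big(\frac{2M^2}{n}+12M\beta\Big)},$$ where $\chi^2(Q\|P)=\mathbb{E}_{\theta\sim P}\big[(Q(\theta)/P(\theta))^2-1\big]$.
   Context: Setting: $\mathcal{Z}=\mathcal{X}\times\mathcal{Y}$ with unknown distribution $\mathcal{D}$; $S=(z_1,\dots,z_n)$ i.i.d. from $\mathcal{D}$; $A:\mathcal{Z}^n\times\Theta\to\mathcal{H}$ deterministic with hyperparameters $\theta\in\Theta$; $\ell:\mathcal{H}\times\mathcal{Z}\to[0,M]$. Risk $R(S,\theta)=\mathbb{E}_{z\sim\mathcal{D}}\ell(A(S,\theta),z)$, empirical risk $\hat R(S,\theta)=\frac1n\sum_i\ell(A(S,\theta),z_i)$, $\Phi(S,\theta)=R(S,\theta)-\hat R(S,\theta)$, and for a distribution $Q$ on $\Theta$, $\Phi(S,Q)=\mathbb{E}_{\theta\sim Q}\Phi(S,\theta)$. Posteriors $Q$ may depend on $S$; $Q(\theta)/P(\theta)$ denotes the density ratio (the $\chi^2$ divergence is $+\infty$ if $Q$ is not absolutely continuous w.r.t. $P$). $\beta$-pointwise hypothesis stability w.r.t. $\ell$ and $P$: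 with $S^{i,z}$ denoting $S$ with the $i$-th example replaced by $z$, $\sup_{i\in\{1,\dots,n\}}\mathbb{E}_{S\sim\mathcal{D}^n}\mathbb{E}_{z\sim\mathcal{D}}\mathbb{E}_{\theta\sim P}\big[|\ell(A(S,\theta),z_i)-\ell(A(S^{i,z},\theta),z_i)|\big]\le\beta$. *)

theory Defs
  imports "HOL-Probability.Probability"
begin

definition sample_measure :: "nat \<Rightarrow> 'z measure \<Rightarrow> (nat \<Rightarrow> 'z) measure" where
  "sample_measure n D = PiM {..<n} (\<lambda>_. D)"

definition risk :: "'z measure \<Rightarrow> ('h \<Rightarrow> 'z \<Rightarrow> real) \<Rightarrow> ((nat \<Rightarrow> 'z) \<Rightarrow> 'p \<Rightarrow> 'h)
    \<Rightarrow> (nat \<Rightarrow> 'z) \<Rightarrow> 'p \<Rightarrow> real" where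
  "risk D loss A S \<theta> = (\<integral>z. loss (A S \<theta>) z \<partial>D)"

definition emp_risk :: "nat \<Rightarrow> ('h \<Rightarrow> 'z \<Rightarrow> real) \<Rightarrow> ((nat \<Rightarrow> 'z) \<Rightarrow> 'p \<Rightarrow> 'h)
    \<Rightarrow> (nat \<Rightarrow> 'z) \<Rightarrow> 'p \<Rightarrow> real" where
  "emp_risk n loss A S \<theta> = (1 / real n) * (\<Sum>i<n. loss (A S \<theta>) (S i))"

definition gen_gap :: "nat \<Rightarrow> 'z measure \<Rightarrow> ('h \<Rightarrow> 'z \<Rightarrow> real) \<Rightarrow> ((nat \<Rightarrow> 'z) \<Rightarrow> 'p \<Rightarrow> 'h)
    \<Rightarrow> (nat \<Rightarrow> 'z) \<Rightarrow> 'p \<Rightarrow> real" where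
  "gen_gap n D loss A S \<theta> = risk D loss A S \<theta> - emp_risk n loss A S \<theta>"

definition gen_gap_post :: "nat \<Rightarrow> 'z measure \<Rightarrow> ('h \<Rightarrow> 'z \<Rightarrow> real) \<Rightarrow> ((nat \<Rightarrow> 'z) \<Rightarrow> 'p \<Rightarrow> 'h)
    \<Rightarrow> (nat \<Rightarrow> 'z) \<Rightarrow> 'p measure \<Rightarrow> real" where
  "gen_gap_post n D loss A S Q = (\<integral>\<theta>. gen_gap n D loss A S \<theta> \<partial>Q)"

definition pointwise_hyp_stable :: "nat \<Rightarrow> 'z measure \<Rightarrow> 'p measure \<Rightarrow> ('h \<Rightarrow> 'z \<Rightarrow> real)
    \<Rightarrow> ((nat \<Rightarrow> 'z) \<Rightarrow> 'p \<Rightarrow> 'h) \<Rightarrow> real \<Rightarrow> bool" where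
  "pointwise_hyp_stable n D P loss A \<beta> \<longleftrightarrow>
     (\<forall>i<n. (\<integral>S. (\<integral>z. (\<integral>\<theta>. \<bar>loss (A S \<theta>) (S i) - loss (A (S(i := z)) \<theta>) (S i)\<bar> \<partial>P) \<partial>D)
               \<partial>sample_measure n D) \<le> \<beta>)"

definition chi_square :: "'p measure \<Rightarrow> 'p measure \<Rightarrow> ereal" where
  "chi_square Q P =
     (if absolutely_continuous P Q
      then enn2ereal (\<integral>\<^sup>+ \<theta>. (RN_deriv P Q \<theta>)\<^sup>2 \<partial>P) - 1
      else \<infinity>)"

end

theory Submission
  imports Defs
begin


lemma intg_bound:
  assumes "finite_measure N" "f \<in> borel_measurable N" "\<And>x. x \<in> space N \<Longrightarrow> \<bar>f x\<bar> \<le> C"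
  shows "integrable N (f :: _ \<Rightarrow> real)"
  using assms by (intro finite_measure.integrable_const_bound[where B=C]) auto

lemma prob_int_bnd:
  assumes "prob_space N" "\<And>x. \<bar>f x\<bar> \<le> (C::real)"
  shows "\<bar>\<integral>x. f x \<partial>N\<bar> \<le> C"
proof -
  have C0: "0 \<le> C" using assms(2)[of undefined] by linarith
  have "\<bar>\<integral>x. f x \<partial>N\<bar> \<le> (\<integral>x. \<bar>f x\<bar> \<partial>N)" by (rule integral_abs_bound)
  also have "\<dots> \<le> (\<integral>x. C \<partial>N)" using prob_space.finite_measure[OF assms(1)]
    by (intro integral_mono_AE') (auto simp: assms C0 finite_measure.integrable_const)
  also have "\<dots> = C" using prob_space.prob_space[OF assms(1)] by simp
  finally show ?thesis .
qed

lemma prod_diff_bnd: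
  fixes a b c d M :: real
  assumes "\<bar>b\<bar> \<le> M" "\<bar>c\<bar> \<le> M"
  shows "\<bar>a*b - c*d\<bar> \<le> M*\<bar>a - c\<bar> + M*\<bar>b - d\<bar>"
proof -
  have e: "a*b - c*d = (a-c)*b + c*(b-d)" by algebra
  have "\<bar>(a-c)*b\<bar> \<le> M*\<bar>a - c\<bar>" unfolding abs_mult
    using mult_right_mono[OF assms(1), of "\<bar>a - c\<bar>"] by (simp add: mult.commute)
  moreover have "\<bar>c*(b-d)\<bar> \<le> M*\<bar>b - d\<bar>" unfolding abs_mult
    using assms(2) by (simp add: mult_right_mono)
  ultimately show ?thesis unfolding e by (meson abs_triangle_ineq add_mono order_trans)
qed

lemma arith4:
  fixes a1 a2 am c1 c2 cm M :: real
  assumes "\<bar>c1\<bar> \<le> M" "\<bar>a2\<bar> \<le> M" "0 \<le> M"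
  shows "a1*c1 \<le> a2*c2 + M*\<bar>a1 - am\<bar> + M*\<bar>am - a2\<bar> + M*\<bar>c1 - cm\<bar> + M*\<bar>cm - c2\<bar>"
proof -
  have "\<bar>a1*c1 - a2*c2\<bar> \<le> M*\<bar>a1 - a2\<bar> + M*\<bar>c1 - c2\<bar>"
    by (rule prod_diff_bnd) (use assms in auto)
  moreover have "M*\<bar>a1 - a2\<bar> \<le> M*\<bar>a1 - am\<bar> + M*\<bar>am - a2\<bar>"
    using mult_left_mono[OF abs_triangle_ineq[of "a1 - am" "am - a2"] assms(3)] by (simp add: distrib_left)
  moreover have "M*\<bar>c1 - c2\<bar> \<le> M*\<bar>c1 - cm\<bar> + M*\<bar>cm - c2\<bar>"
    using mult_left_mono[OF abs_triangle_ineq[of "c1 - cm" "cm - c2"] assms(3)] by (simp add: distrib_left)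
  ultimately show ?thesis by (simp add: abs_le_iff)
qed

locale stab =
  fixes D :: "'z measure" and n :: nat and L :: "(nat \<Rightarrow> 'z) \<Rightarrow> 'z \<Rightarrow> real" and M :: real
  assumes D: "prob_space D"
  and Lm: "case_prod L \<in> borel_measurable (PiM {..<n} (\<lambda>_. D) \<Otimes>\<^sub>M D)"
  and Lb0: "\<And>S z. 0 \<le> L S z" and LbM: "\<And>S z. L S z \<le> M"
begin

sublocale D: prob_space D by (rule D)

abbreviation "Pn \<equiv> PiM {..<n} (\<lambda>_. D)"

lemma PS: "prob_space Pn"
  by (rule prob_space_PiM) (use D in auto)

sublocale P: prob_space Pn by (rule PS)

sublocale PD: pair_sigma_finite Pn D ..
sublocale DD: pair_sigma_finite D D ..
sublocale PR: product_sigma_finite "\<lambda>_. D" by unfold_locales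

lemma pDD: "prob_space (D \<Otimes>\<^sub>M D)" by (rule prob_space_pair[OF D D])
lemma pPD: "prob_space (Pn \<Otimes>\<^sub>M D)" by (rule prob_space_pair[OF PS D])
lemma fDD: "finite_measure (D \<Otimes>\<^sub>M D)" by (rule prob_space.finite_measure[OF pDD])
lemma fPD: "finite_measure (Pn \<Otimes>\<^sub>M D)" by (rule prob_space.finite_measure[OF pPD])

lemma L_meas[measurable (raw)]:
  "f \<in> measurable N Pn \<Longrightarrow> g \<in> measurable N D \<Longrightarrow> (\<lambda>x. L (f x) (g x)) \<in> borel_measurable N"
  using measurable_compose[OF measurable_Pair Lm, of f N g] by simp

definition R where "R S = (\<integral>w. L S w \<partial>D)"

lemma R_meas[measurable (raw)]:
  "f \<in> measurable N Pn \<Longrightarrow> (\<lambda>x. R (f x)) \<in> borel_measurable N"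
proof -
  assume f: "f \<in> measurable N Pn"
  have "R \<in> borel_measurable Pn"
    using D.borel_measurable_lebesgue_integral[OF Lm] by (simp add: R_def[abs_def])
  from measurable_compose[OF f this] show ?thesis .
qed

lemma M0: "0 \<le> M" using Lb0 LbM order_trans by blast

lemma R_bnd: "0 \<le> R S" "R S \<le> M"
proof -
  show "0 \<le> R S" unfolding R_def by (rule integral_nonneg_AE) (simp add: Lb0)
  show "R S \<le> M"
  proof (cases "integrable D (L S)")
    case True
    have "R S \<le> (\<integral>w. M \<partial>D)" unfolding R_def
      by (rule integral_mono[OF True]) (auto simp: LbM)
    then show ?thesis by (simp add: D.prob_space)
  next
    case False then show ?thesis by (simp add: R_def not_integrable_integral_eq M0)
  qed
qed


sublocale DDp: prob_space "D \<Otimes>\<^sub>M D" by (rule pDD)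
sublocale PDD: pair_sigma_finite Pn "D \<Otimes>\<^sub>M D" ..

lemma pPDD: "prob_space (Pn \<Otimes>\<^sub>M (D \<Otimes>\<^sub>M D))" by (rule prob_space_pair[OF PS pDD])
lemma fPDD: "finite_measure (Pn \<Otimes>\<^sub>M (D \<Otimes>\<^sub>M D))" by (rule prob_space.finite_measure[OF pPDD])

lemma Lab[simp]: "\<bar>L S z\<bar> \<le> M" "\<bar>L S z - L T w\<bar> \<le> M"
  using Lb0[of S z] LbM[of S z] Lb0[of T w] LbM[of T w] by auto

lemma Lab2: "\<bar>L S z - L T w\<bar> \<le> 2*M" "\<bar>L S z - L T w\<bar> + \<bar>L T' w' - L U y\<bar> \<le> 2*M"
  using Lab(2)[of S z T w] Lab(2)[of T' w' U y] M0 by linarith+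

lemma Rab[simp]: "\<bar>R S\<bar> \<le> M" "\<bar>R S - R T\<bar> \<le> M" "\<bar>R S - L T w\<bar> \<le> M"
  using R_bnd[of S] R_bnd[of T] Lb0[of T w] LbM[of T w] by auto

lemma L_int: "S \<in> space Pn \<Longrightarrow> integrable D (L S)"
proof -
  assume S: "S \<in> space Pn"
  have "(\<lambda>w. L S w) \<in> borel_measurable D"
    using measurable_compose[OF measurable_Pair[OF measurable_const[OF S] measurable_ident_sets[OF refl]] Lm]
    by simp
  then show ?thesis by (intro intg_bound[OF D.finite_measure_axioms, where C=M]) auto
qed

lemma dbl:
  fixes g :: "(nat \<Rightarrow> 'z) \<Rightarrow> 'z \<Rightarrow> real"
  assumes m: "(\<lambda>x. g (fst x) (snd x)) \<in> borel_measurable (Pn \<Otimes>\<^sub>M D)"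
    and b: "\<And>S u. \<bar>g S u\<bar> \<le> C"
  shows "(\<integral>S. \<integral>u. g S u \<partial>D \<partial>Pn) = (\<integral>x. g (fst x) (snd x) \<partial>(Pn \<Otimes>\<^sub>M D))"
proof -
  have "integrable (Pn \<Otimes>\<^sub>M D) (\<lambda>x. g (fst x) (snd x))"
    by (rule intg_bound[OF fPD m]) (rule b)
  from PD.integral_fst'[OF this] show ?thesis by simp
qed

lemma trpl:
  fixes g :: "(nat \<Rightarrow> 'z) \<Rightarrow> 'z \<Rightarrow> 'z \<Rightarrow> real"
  assumes m: "(\<lambda>x. g (fst x) (fst (snd x)) (snd (snd x))) \<in> borel_measurable (Pn \<Otimes>\<^sub>M (D \<Otimes>\<^sub>M D))"
    and b: "\<And>S u w. \<bar>g S u w\<bar> \<le> C"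
  shows "(\<integral>S. \<integral>u. \<integral>w. g S u w \<partial>D \<partial>D \<partial>Pn) = (\<integral>x. g (fst x) (fst (snd x)) (snd (snd x)) \<partial>(Pn \<Otimes>\<^sub>M (D \<Otimes>\<^sub>M D)))"
proof -
  have "(\<integral>S. \<integral>u. \<integral>w. g S u w \<partial>D \<partial>D \<partial>Pn) = (\<integral>S. \<integral>p. g S (fst p) (snd p) \<partial>(D \<Otimes>\<^sub>M D) \<partial>Pn)"
  proof (rule Bochner_Integration.integral_cong[OF refl])
    fix S assume S: "S \<in> space Pn"
    have "(\<lambda>p. g S (fst p) (snd p)) \<in> borel_measurable (D \<Otimes>\<^sub>M D)"
      using measurable_compose[OF measurable_Pair[OF measurable_const[OF S] measurable_ident_sets[OF refl]] m]
      by simp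
    then have "integrable (D \<Otimes>\<^sub>M D) (\<lambda>p. g S (fst p) (snd p))"
      by (rule intg_bound[OF fDD]) (rule b)
    from DD.integral_fst'[OF this]
    show "(\<integral>u. \<integral>w. g S u w \<partial>D \<partial>D) = (\<integral>p. g S (fst p) (snd p) \<partial>(D \<Otimes>\<^sub>M D))" by simp
  qed
  also have "\<dots> = (\<integral>x. g (fst x) (fst (snd x)) (snd (snd x)) \<partial>(Pn \<Otimes>\<^sub>M (D \<Otimes>\<^sub>M D)))"
  proof -
    have "integrable (Pn \<Otimes>\<^sub>M (D \<Otimes>\<^sub>M D)) (\<lambda>x. g (fst x) (fst (snd x)) (snd (snd x)))"
      by (rule intg_bound[OF fPDD m]) (rule b)
    from PDD.integral_fst'[OF this] show ?thesis by simp
  qed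
  finally show ?thesis .
qed

lemma inner_swap:
  fixes g :: "(nat \<Rightarrow> 'z) \<Rightarrow> 'z \<Rightarrow> 'z \<Rightarrow> real"
  assumes m: "(\<lambda>x. g (fst x) (fst (snd x)) (snd (snd x))) \<in> borel_measurable (Pn \<Otimes>\<^sub>M (D \<Otimes>\<^sub>M D))"
    and b: "\<And>S u w. \<bar>g S u w\<bar> \<le> C"
  shows "(\<integral>S. \<integral>u. \<integral>w. g S u w \<partial>D \<partial>D \<partial>Pn) = (\<integral>S. \<integral>w. \<integral>u. g S u w \<partial>D \<partial>D \<partial>Pn)"
proof (rule Bochner_Integration.integral_cong[OF refl])
  fix S assume S: "S \<in> space Pn"
  have "(\<lambda>p. g S (fst p) (snd p)) \<in> borel_measurable (D \<Otimes>\<^sub>M D)"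
    using measurable_compose[OF measurable_Pair[OF measurable_const[OF S] measurable_ident_sets[OF refl]] m]
    by simp
  then have "integrable (D \<Otimes>\<^sub>M D) (\<lambda>p. g S (fst p) (snd p))"
    by (rule intg_bound[OF fDD]) (rule b)
  then have "integrable (D \<Otimes>\<^sub>M D) (\<lambda>(u,w). g S u w)" by (simp add: split_beta')
  from DD.Fubini_integral[OF this]
  show "(\<integral>u. \<integral>w. g S u w \<partial>D \<partial>D) = (\<integral>w. \<integral>u. g S u w \<partial>D \<partial>D)" by simp
qed


lemma trpl_le:
  fixes g h :: "(nat \<Rightarrow> 'z) \<Rightarrow> 'z \<Rightarrow> 'z \<Rightarrow> real"
  assumes mg: "(\<lambda>x. g (fst x) (fst (snd x)) (snd (snd x))) \<in> borel_measurable (Pn \<Otimes>\<^sub>M (D \<Otimes>\<^sub>M D))"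
    and mh: "(\<lambda>x. h (fst x) (fst (snd x)) (snd (snd x))) \<in> borel_measurable (Pn \<Otimes>\<^sub>M (D \<Otimes>\<^sub>M D))"
    and bg: "\<And>S u w. \<bar>g S u w\<bar> \<le> C" and bh: "\<And>S u w. \<bar>h S u w\<bar> \<le> C'"
    and le: "\<And>S u w. g S u w \<le> h S u w"
  shows "(\<integral>S. \<integral>u. \<integral>w. g S u w \<partial>D \<partial>D \<partial>Pn) \<le> (\<integral>S. \<integral>u. \<integral>w. h S u w \<partial>D \<partial>D \<partial>Pn)"
  unfolding trpl[OF mg bg] trpl[OF mh bh]
  by (rule integral_mono) (auto intro: intg_bound[OF fPDD mg bg] intg_bound[OF fPDD mh bh] le)

lemma trpl_add:
  fixes g h :: "(nat \<Rightarrow> 'z) \<Rightarrow> 'z \<Rightarrow> 'z \<Rightarrow> real"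
  assumes mg: "(\<lambda>x. g (fst x) (fst (snd x)) (snd (snd x))) \<in> borel_measurable (Pn \<Otimes>\<^sub>M (D \<Otimes>\<^sub>M D))"
    and mh: "(\<lambda>x. h (fst x) (fst (snd x)) (snd (snd x))) \<in> borel_measurable (Pn \<Otimes>\<^sub>M (D \<Otimes>\<^sub>M D))"
    and bg: "\<And>S u w. \<bar>g S u w\<bar> \<le> C" and bh: "\<And>S u w. \<bar>h S u w\<bar> \<le> C'"
  shows "(\<integral>S. \<integral>u. \<integral>w. g S u w + h S u w \<partial>D \<partial>D \<partial>Pn) = (\<integral>S. \<integral>u. \<integral>w. g S u w \<partial>D \<partial>D \<partial>Pn) + (\<integral>S. \<integral>u. \<integral>w. h S u w \<partial>D \<partial>D \<partial>Pn)"
proof -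
  have b: "\<bar>g S u w + h S u w\<bar> \<le> C + C'" for S u w
    using bg[of S u w] bh[of S u w] by linarith
  have m: "(\<lambda>x. g (fst x) (fst (snd x)) (snd (snd x)) + h (fst x) (fst (snd x)) (snd (snd x))) \<in> borel_measurable (Pn \<Otimes>\<^sub>M (D \<Otimes>\<^sub>M D))"
    using mg mh by measurable
  show ?thesis
    unfolding trpl[OF mg bg] trpl[OF mh bh] trpl[where g="\<lambda>S u w. g S u w + h S u w", OF m b]
    by (rule Bochner_Integration.integral_add) (rule intg_bound[OF fPDD mg bg], rule intg_bound[OF fPDD mh bh])
qed


lemma trpl_add5:
  fixes f1 f2 f3 f4 f5 :: "(nat \<Rightarrow> 'z) \<Rightarrow> 'z \<Rightarrow> 'z \<Rightarrow> real"
  assumes m1: "(\<lambda>x. f1 (fst x) (fst (snd x)) (snd (snd x))) \<in> borel_measurable (Pn \<Otimes>\<^sub>M (D \<Otimes>\<^sub>M D))"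
    and m2: "(\<lambda>x. f2 (fst x) (fst (snd x)) (snd (snd x))) \<in> borel_measurable (Pn \<Otimes>\<^sub>M (D \<Otimes>\<^sub>M D))"
    and m3: "(\<lambda>x. f3 (fst x) (fst (snd x)) (snd (snd x))) \<in> borel_measurable (Pn \<Otimes>\<^sub>M (D \<Otimes>\<^sub>M D))"
    and m4: "(\<lambda>x. f4 (fst x) (fst (snd x)) (snd (snd x))) \<in> borel_measurable (Pn \<Otimes>\<^sub>M (D \<Otimes>\<^sub>M D))"
    and m5: "(\<lambda>x. f5 (fst x) (fst (snd x)) (snd (snd x))) \<in> borel_measurable (Pn \<Otimes>\<^sub>M (D \<Otimes>\<^sub>M D))"
    and b1: "\<And>S u w. \<bar>f1 S u w\<bar> \<le> Ca" and b2: "\<And>S u w. \<bar>f2 S u w\<bar> \<le> Cb"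
    and b3: "\<And>S u w. \<bar>f3 S u w\<bar> \<le> Cc" and b4: "\<And>S u w. \<bar>f4 S u w\<bar> \<le> Cd"
    and b5: "\<And>S u w. \<bar>f5 S u w\<bar> \<le> Ce"
  shows "(\<integral>S. \<integral>u. \<integral>w. f1 S u w + f2 S u w + f3 S u w + f4 S u w + f5 S u w \<partial>D \<partial>D \<partial>Pn)
    = (\<integral>S. \<integral>u. \<integral>w. f1 S u w \<partial>D \<partial>D \<partial>Pn) + (\<integral>S. \<integral>u. \<integral>w. f2 S u w \<partial>D \<partial>D \<partial>Pn)
    + (\<integral>S. \<integral>u. \<integral>w. f3 S u w \<partial>D \<partial>D \<partial>Pn) + (\<integral>S. \<integral>u. \<integral>w. f4 S u w \<partial>D \<partial>D \<partial>Pn)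
    + (\<integral>S. \<integral>u. \<integral>w. f5 S u w \<partial>D \<partial>D \<partial>Pn)"
proof -
  have b: "\<bar>f1 S u w + f2 S u w + f3 S u w + f4 S u w + f5 S u w\<bar> \<le> Ca + Cb + Cc + Cd + Ce" for S u w
    using b1[of S u w] b2[of S u w] b3[of S u w] b4[of S u w] b5[of S u w]
    by (auto simp: abs_le_iff)
  have m: "(\<lambda>x. f1 (fst x) (fst (snd x)) (snd (snd x)) + f2 (fst x) (fst (snd x)) (snd (snd x))
     + f3 (fst x) (fst (snd x)) (snd (snd x)) + f4 (fst x) (fst (snd x)) (snd (snd x))
     + f5 (fst x) (fst (snd x)) (snd (snd x))) \<in> borel_measurable (Pn \<Otimes>\<^sub>M (D \<Otimes>\<^sub>M D))"
    using m1 m2 m3 m4 m5 by measurable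
  note i = intg_bound[OF fPDD m1 b1] intg_bound[OF fPDD m2 b2] intg_bound[OF fPDD m3 b3]
    intg_bound[OF fPDD m4 b4] intg_bound[OF fPDD m5 b5]
  show ?thesis
    unfolding trpl[OF m1 b1] trpl[OF m2 b2] trpl[OF m3 b3] trpl[OF m4 b4] trpl[OF m5 b5]
      trpl[where g="\<lambda>S u w. f1 S u w + f2 S u w + f3 S u w + f4 S u w + f5 S u w", OF m b]
    using i by simp
qed

definition b where "b i = (\<integral>S. \<integral>z. \<bar>L S (S i) - L (S(i:=z)) (S i)\<bar> \<partial>D \<partial>Pn)"

context fixes i assumes i: "i < n"
begin

lemma upd_meas[measurable (raw)]:
  "f \<in> measurable N Pn \<Longrightarrow> h \<in> measurable N D \<Longrightarrow> (\<lambda>x. (f x)(i := h x)) \<in> measurable N Pn"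
  using i by (intro measurable_fun_upd[where J="{..<n}"]) auto

lemma i_in[simp]: "i \<in> {..<n}" "i < n" using i by auto

lemma swap:
  fixes H :: "(nat \<Rightarrow> 'z) \<Rightarrow> 'z \<Rightarrow> real"
  assumes H[measurable]: "case_prod H \<in> borel_measurable (Pn \<Otimes>\<^sub>M D)"
    and Hb: "\<And>S u. \<bar>H S u\<bar> \<le> C"
  shows "(\<integral>S. \<integral>u. H (S(i:=u)) (S i) \<partial>D \<partial>Pn) = (\<integral>S. \<integral>u. H S u \<partial>D \<partial>Pn)"
proof -
  define I where "I = {..<n} - {i}"
  have ins: "insert i I = {..<n}" and iI: "i \<notin> I" and fI: "finite I" using i by (auto simp: I_def)
  have H'[measurable]: "(\<lambda>x. H (fst x) (snd x)) \<in> borel_measurable (Pn \<Otimes>\<^sub>M D)"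
    using H by (simp add: split_beta')
  have bnd: "\<bar>\<integral>u. H T u \<partial>D\<bar> \<le> C" for T
    by (rule prob_int_bnd[OF D]) (rule Hb)
  have bnd': "\<bar>\<integral>u. H (T(i:=u)) (T i) \<partial>D\<bar> \<le> C" for T
    by (rule prob_int_bnd[OF D]) (rule Hb)
  have m1: "(\<lambda>S. \<integral>u. H (S(i:=u)) (S i) \<partial>D) \<in> borel_measurable Pn"
    by measurable
  have m2: "(\<lambda>S. \<integral>u. H S u \<partial>D) \<in> borel_measurable Pn"
    by measurable
  have int1: "integrable (PiM (insert i I) (\<lambda>_. D)) (\<lambda>S. \<integral>u. H (S(i:=u)) (S i) \<partial>D)"
    unfolding ins by (rule intg_bound[OF _ m1, where C=C]) (auto intro: P.finite_measure_axioms bnd')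
  have int2: "integrable (PiM (insert i I) (\<lambda>_. D)) (\<lambda>S. \<integral>u. H S u \<partial>D)"
    unfolding ins by (rule intg_bound[OF _ m2, where C=C]) (auto intro: P.finite_measure_axioms bnd)
  have "(\<integral>S. \<integral>u. H (S(i:=u)) (S i) \<partial>D \<partial>Pn) = (\<integral>x. \<integral>y. \<integral>u. H (x(i:=u)) y \<partial>D \<partial>D \<partial>PiM I (\<lambda>_. D))"
    using PR.product_integral_insert[OF fI iI int1] unfolding ins by simp
  also have "\<dots> = (\<integral>x. \<integral>y. \<integral>u. H (x(i:=y)) u \<partial>D \<partial>D \<partial>PiM I (\<lambda>_. D))"
  proof (rule Bochner_Integration.integral_cong[OF refl])
    fix x assume x: "x \<in> space (PiM I (\<lambda>_. D))"
    have xm[measurable]: "(\<lambda>u. x(i:=u)) \<in> measurable D Pn"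
      using measurable_component_update[OF x iI] unfolding ins .
    have "integrable (D \<Otimes>\<^sub>M D) (\<lambda>(y,u). H (x(i:=u)) y)"
      by (rule intg_bound[where C=C]) (auto intro: fDD Hb)
    from DD.Fubini_integral[OF this]
    show "(\<integral>y. \<integral>u. H (x(i:=u)) y \<partial>D \<partial>D) = (\<integral>y. \<integral>u. H (x(i:=y)) u \<partial>D \<partial>D)"
      by simp
  qed
  also have "\<dots> = (\<integral>S. \<integral>u. H S u \<partial>D \<partial>Pn)"
    using PR.product_integral_insert[OF fI iI int2] unfolding ins by simp
  finally show ?thesis .
qed


lemma fresh: "(\<integral>S. \<integral>u. \<integral>w. \<bar>L S w - L (S(i:=u)) w\<bar> \<partial>D \<partial>D \<partial>Pn) \<le> 2 * b i"
proof -
  have e1: "(\<integral>S. \<integral>u. \<integral>w. \<bar>L S w - L (S(i:=w)) w\<bar> \<partial>D \<partial>D \<partial>Pn) = b i"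
  proof -
    have "b i = (\<integral>S. \<integral>u. (\<lambda>T w. \<bar>L (T(i:=w)) w - L T w\<bar>) (S(i:=u)) (S i) \<partial>D \<partial>Pn)"
      unfolding b_def by (simp add: abs_minus_commute)
    also have "\<dots> = (\<integral>S. \<integral>u. (\<lambda>T w. \<bar>L (T(i:=w)) w - L T w\<bar>) S u \<partial>D \<partial>Pn)"
      by (rule swap[where C=M]) auto
    also have "\<dots> = (\<integral>S. \<integral>u. \<integral>w. \<bar>L S w - L (S(i:=w)) w\<bar> \<partial>D \<partial>D \<partial>Pn)"
      by (simp add: abs_minus_commute D.prob_space)
    finally show ?thesis by simp
  qed
  have e2: "(\<integral>S. \<integral>u. \<integral>w. \<bar>L (S(i:=w)) w - L (S(i:=u)) w\<bar> \<partial>D \<partial>D \<partial>Pn) = b i"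
  proof -
    have "(\<integral>S. \<integral>u. \<integral>w. \<bar>L (S(i:=w)) w - L (S(i:=u)) w\<bar> \<partial>D \<partial>D \<partial>Pn)
        = (\<integral>S. \<integral>w. \<integral>u. \<bar>L (S(i:=w)) w - L (S(i:=u)) w\<bar> \<partial>D \<partial>D \<partial>Pn)"
      by (rule inner_swap[where C=M]) auto
    also have "\<dots> = (\<integral>S. \<integral>w. (\<lambda>T y. \<integral>u. \<bar>L T (T i) - L (T(i:=u)) (T i)\<bar> \<partial>D) (S(i:=w)) (S i) \<partial>D \<partial>Pn)"
      by simp
    also have "\<dots> = (\<integral>S. \<integral>w. (\<lambda>T y. \<integral>u. \<bar>L T (T i) - L (T(i:=u)) (T i)\<bar> \<partial>D) S w \<partial>D \<partial>Pn)"
      apply (rule swap[where C=M])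
      subgoal by measurable
      subgoal by (rule prob_int_bnd[OF D]) simp
      done
    also have "\<dots> = b i" by (simp add: b_def D.prob_space)
    finally show ?thesis .
  qed
  have "(\<integral>S. \<integral>u. \<integral>w. \<bar>L S w - L (S(i:=u)) w\<bar> \<partial>D \<partial>D \<partial>Pn)
     = (\<integral>x. \<bar>L (fst x) (snd (snd x)) - L ((fst x)(i:=fst (snd x))) (snd (snd x))\<bar> \<partial>(Pn \<Otimes>\<^sub>M (D \<Otimes>\<^sub>M D)))"
    by (rule trpl[where C=M]) auto
  also have "\<dots> \<le> (\<integral>x. \<bar>L (fst x) (snd (snd x)) - L ((fst x)(i:=snd (snd x))) (snd (snd x))\<bar>
      + \<bar>L ((fst x)(i:=snd (snd x))) (snd (snd x)) - L ((fst x)(i:=fst (snd x))) (snd (snd x))\<bar> \<partial>(Pn \<Otimes>\<^sub>M (D \<Otimes>\<^sub>M D)))"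
    by (rule integral_mono; (rule intg_bound[OF fPDD, where C="2*M"])?) (auto intro: order_trans[OF abs_triangle_ineq] add_mono simp: Lab2)
  also have "\<dots> = (\<integral>x. \<bar>L (fst x) (snd (snd x)) - L ((fst x)(i:=snd (snd x))) (snd (snd x))\<bar> \<partial>(Pn \<Otimes>\<^sub>M (D \<Otimes>\<^sub>M D)))
      + (\<integral>x. \<bar>L ((fst x)(i:=snd (snd x))) (snd (snd x)) - L ((fst x)(i:=fst (snd x))) (snd (snd x))\<bar> \<partial>(Pn \<Otimes>\<^sub>M (D \<Otimes>\<^sub>M D)))"
    by (rule Bochner_Integration.integral_add; rule intg_bound[OF fPDD, where C=M]) auto
  also have "\<dots> = b i + b i"
    using e1 e2 trpl[where C=M and g="\<lambda>S u w. \<bar>L S w - L (S(i:=w)) w\<bar>"]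
      trpl[where C=M and g="\<lambda>S u w. \<bar>L (S(i:=w)) w - L (S(i:=u)) w\<bar>"] by simp
  finally show ?thesis by simp
qed


lemma upd_space: "S \<in> space Pn \<Longrightarrow> u \<in> space D \<Longrightarrow> S(i:=u) \<in> space Pn"
  using measurable_space[OF upd_meas[OF measurable_const measurable_ident_sets[OF refl]]] by blast

lemma Rsens: "(\<integral>S. \<integral>u. \<bar>R S - R (S(i:=u))\<bar> \<partial>D \<partial>Pn) \<le> 2 * b i"
proof -
  have "(\<integral>S. \<integral>u. \<bar>R S - R (S(i:=u))\<bar> \<partial>D \<partial>Pn) \<le> (\<integral>S. \<integral>u. \<integral>w. \<bar>L S w - L (S(i:=u)) w\<bar> \<partial>D \<partial>D \<partial>Pn)"
  proof (rule integral_mono)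
    show "integrable Pn (\<lambda>S. \<integral>u. \<bar>R S - R (S(i:=u))\<bar> \<partial>D)"
      apply (rule intg_bound[OF P.finite_measure_axioms, where C=M])
      subgoal by measurable
      subgoal by (rule prob_int_bnd[OF D]) simp
      done
    show "integrable Pn (\<lambda>S. \<integral>u. \<integral>w. \<bar>L S w - L (S(i:=u)) w\<bar> \<partial>D \<partial>D)"
      by (rule intg_bound[OF P.finite_measure_axioms, where C=M]) (measurable, (rule prob_int_bnd[OF D])+, simp)
    fix S assume S: "S \<in> space Pn"
    show "(\<integral>u. \<bar>R S - R (S(i:=u))\<bar> \<partial>D) \<le> (\<integral>u. \<integral>w. \<bar>L S w - L (S(i:=u)) w\<bar> \<partial>D \<partial>D)"
    proof (rule integral_mono)
      show "integrable D (\<lambda>u. \<bar>R S - R (S(i:=u))\<bar>)"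
        apply (rule intg_bound[OF D.finite_measure_axioms, where C=M])
        subgoal using S by measurable
        subgoal by simp
        done
      show "integrable D (\<lambda>u. \<integral>w. \<bar>L S w - L (S(i:=u)) w\<bar> \<partial>D)"
        by (rule intg_bound[OF D.finite_measure_axioms, where C=M]) (use S in measurable, rule prob_int_bnd[OF D], simp)
      fix u assume u: "u \<in> space D"
      have "R S - R (S(i:=u)) = (\<integral>w. L S w - L (S(i:=u)) w \<partial>D)"
        unfolding R_def using L_int[OF S] L_int[OF upd_space[OF S u]] by simp
      then show "\<bar>R S - R (S(i:=u))\<bar> \<le> (\<integral>w. \<bar>L S w - L (S(i:=u)) w\<bar> \<partial>D)"
        by (simp add: integral_abs_bound)
    qed
  qed
  then show ?thesis using fresh by linarith
qed

lemma RL: "(\<integral>S. R S * R S \<partial>Pn) - 3*M*b i \<le> (\<integral>S. R S * L S (S i) \<partial>Pn)"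
proof -
  let ?Q = "Pn \<Otimes>\<^sub>M D"
  have fQ: "finite_measure ?Q" by (rule fPD)
  have MM: "\<bar>R S * L T w\<bar> \<le> M*M" for S T w
    unfolding abs_mult by (rule mult_mono) (auto simp: M0)
  have A: "(\<integral>S. R S * L S (S i) \<partial>Pn) = (\<integral>x. R (fst x) * L (fst x) (fst x i) \<partial>?Q)"
    using dbl[where g="\<lambda>S u. R S * L S (S i)" and C="M*M"] by (simp add: D.prob_space MM)
  have "(\<integral>S. R S * R S \<partial>Pn) = (\<integral>S. \<integral>u. (\<lambda>T w. R T * L T w) S u \<partial>D \<partial>Pn)"
    by (simp add: R_def[symmetric])
  also have "\<dots> = (\<integral>S. \<integral>u. (\<lambda>T w. R T * L T w) (S(i:=u)) (S i) \<partial>D \<partial>Pn)"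
    by (rule swap[where C="M*M", symmetric]) (measurable, rule MM)
  also have "\<dots> = (\<integral>x. R ((fst x)(i:=snd x)) * L ((fst x)(i:=snd x)) (fst x i) \<partial>?Q)"
    using dbl[where g="\<lambda>S u. R (S(i:=u)) * L (S(i:=u)) (S i)" and C="M*M"] by (simp add: MM)
  finally have B: "(\<integral>S. R S * R S \<partial>Pn) = (\<integral>x. R ((fst x)(i:=snd x)) * L ((fst x)(i:=snd x)) (fst x i) \<partial>?Q)" .
  have i1: "integrable ?Q (\<lambda>x. R (fst x) * L (fst x) (fst x i))"
    by (rule intg_bound[OF fQ, where C="M*M"]) (measurable, rule MM)
  have i2: "integrable ?Q (\<lambda>x. R ((fst x)(i:=snd x)) * L ((fst x)(i:=snd x)) (fst x i))"
    by (rule intg_bound[OF fQ, where C="M*M"]) (measurable, rule MM)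
  have i3: "integrable ?Q (\<lambda>x. \<bar>R (fst x) - R ((fst x)(i:=snd x))\<bar>)"
    apply (rule intg_bound[OF fQ, where C="M"])
    subgoal by measurable
    subgoal by simp
    done
  have i4: "integrable ?Q (\<lambda>x. \<bar>L (fst x) (fst x i) - L ((fst x)(i:=snd x)) (fst x i)\<bar>)"
    apply (rule intg_bound[OF fQ, where C="M"])
    subgoal by measurable
    subgoal by simp
    done
  have "(\<integral>S. R S * R S \<partial>Pn) - (\<integral>S. R S * L S (S i) \<partial>Pn)
      = (\<integral>x. R ((fst x)(i:=snd x)) * L ((fst x)(i:=snd x)) (fst x i) - R (fst x) * L (fst x) (fst x i) \<partial>?Q)"
    unfolding A B using i1 i2 by simp
  also have "\<dots> \<le> (\<integral>x. M * \<bar>R (fst x) - R ((fst x)(i:=snd x))\<bar> + M * \<bar>L (fst x) (fst x i) - L ((fst x)(i:=snd x)) (fst x i)\<bar> \<partial>?Q)"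
  proof (rule integral_mono)
    show "integrable ?Q (\<lambda>x. R ((fst x)(i:=snd x)) * L ((fst x)(i:=snd x)) (fst x i) - R (fst x) * L (fst x) (fst x i))"
      using i1 i2 by simp
    show "integrable ?Q (\<lambda>x. M * \<bar>R (fst x) - R ((fst x)(i:=snd x))\<bar> + M * \<bar>L (fst x) (fst x i) - L ((fst x)(i:=snd x)) (fst x i)\<bar>)"
      using i3 i4 by simp
    fix x
    have "\<bar>R (fst x) * L (fst x) (fst x i) - R ((fst x)(i:=snd x)) * L ((fst x)(i:=snd x)) (fst x i)\<bar>
       \<le> M * \<bar>R (fst x) - R ((fst x)(i:=snd x))\<bar> + M * \<bar>L (fst x) (fst x i) - L ((fst x)(i:=snd x)) (fst x i)\<bar>"
      by (rule prod_diff_bnd) simp_all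
    then show "R ((fst x)(i:=snd x)) * L ((fst x)(i:=snd x)) (fst x i) - R (fst x) * L (fst x) (fst x i)
       \<le> M * \<bar>R (fst x) - R ((fst x)(i:=snd x))\<bar> + M * \<bar>L (fst x) (fst x i) - L ((fst x)(i:=snd x)) (fst x i)\<bar>"
      by linarith
  qed
  also have "\<dots> = M * (\<integral>x. \<bar>R (fst x) - R ((fst x)(i:=snd x))\<bar> \<partial>?Q) + M * (\<integral>x. \<bar>L (fst x) (fst x i) - L ((fst x)(i:=snd x)) (fst x i)\<bar> \<partial>?Q)"
    using i3 i4 by simp
  also have "(\<integral>x. \<bar>R (fst x) - R ((fst x)(i:=snd x))\<bar> \<partial>?Q) = (\<integral>S. \<integral>u. \<bar>R S - R (S(i:=u))\<bar> \<partial>D \<partial>Pn)"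
    apply (rule dbl[where C=M, symmetric])
    subgoal by measurable
    subgoal by simp
    done
  also have "(\<integral>x. \<bar>L (fst x) (fst x i) - L ((fst x)(i:=snd x)) (fst x i)\<bar> \<partial>?Q) = b i"
    unfolding b_def apply (rule dbl[where C=M, symmetric])
    subgoal by measurable
    subgoal by simp
    done
  finally have "(\<integral>S. R S * R S \<partial>Pn) - (\<integral>S. R S * L S (S i) \<partial>Pn) \<le> M * (\<integral>S. \<integral>u. \<bar>R S - R (S(i:=u))\<bar> \<partial>D \<partial>Pn) + M * b i" .
  moreover have "M * (\<integral>S. \<integral>u. \<bar>R S - R (S(i:=u))\<bar> \<partial>D \<partial>Pn) \<le> M * (2 * b i)"
    by (rule mult_left_mono[OF Rsens M0])
  ultimately show ?thesis by linarith
qed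

end
declare i_in[simp del]

context fixes j k assumes jn: "j < n" and kn: "k < n" and jk: "j \<noteq> k"
begin

lemmas upd_jk[measurable (raw)] = upd_meas[OF jn] upd_meas[OF kn]
lemma jk_in[simp]: "j \<in> {..<n}" "k \<in> {..<n}" "j < n" "k < n" using jn kn by auto

lemma LLz: "(\<integral>S. \<integral>u. \<integral>v. L (S(j:=u,k:=v)) (S j) * L (S(j:=u,k:=v)) (S k) \<partial>D \<partial>D \<partial>Pn) = (\<integral>S. R S * R S \<partial>Pn)"
proof -
  have MM: "\<bar>L T w * L T' w'\<bar> \<le> M*M" for T T' w w'
    unfolding abs_mult by (rule mult_mono) (auto simp: M0)
  have MR: "\<bar>R T * L T' w'\<bar> \<le> M*M" for T T' w'
    unfolding abs_mult by (rule mult_mono) (auto simp: M0)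
  have "(\<integral>S. \<integral>u. \<integral>v. L (S(j:=u,k:=v)) (S j) * L (S(j:=u,k:=v)) (S k) \<partial>D \<partial>D \<partial>Pn)
     = (\<integral>S. \<integral>u. (\<lambda>T y. \<integral>v. L (T(k:=v)) y * L (T(k:=v)) (T k) \<partial>D) (S(j:=u)) (S j) \<partial>D \<partial>Pn)"
    using jk by simp
  also have "\<dots> = (\<integral>S. \<integral>u. (\<lambda>T y. \<integral>v. L (T(k:=v)) y * L (T(k:=v)) (T k) \<partial>D) S u \<partial>D \<partial>Pn)"
    apply (rule swap[OF jn, where C="M*M"])
    subgoal by measurable
    subgoal by (rule prob_int_bnd[OF D]) (rule MM)
    done
  also have "\<dots> = (\<integral>S. \<integral>v. \<integral>u. L (S(k:=v)) u * L (S(k:=v)) (S k) \<partial>D \<partial>D \<partial>Pn)"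
    apply (rule inner_swap[where C="M*M"])
    subgoal by measurable
    subgoal by (rule MM)
    done
  also have "\<dots> = (\<integral>S. \<integral>v. (\<lambda>T w. R T * L T w) (S(k:=v)) (S k) \<partial>D \<partial>Pn)"
    by (simp add: R_def)
  also have "\<dots> = (\<integral>S. \<integral>v. (\<lambda>T w. R T * L T w) S v \<partial>D \<partial>Pn)"
    apply (rule swap[OF kn, where C="M*M"])
    subgoal by measurable
    subgoal by (rule MR)
    done
  also have "\<dots> = (\<integral>S. R S * R S \<partial>Pn)"
    by (simp add: R_def)
  finally show ?thesis .
qed

lemma T2b: "(\<integral>S. \<integral>u. \<integral>v. \<bar>L (S(j:=u)) (S j) - L (S(j:=u,k:=v)) (S j)\<bar> \<partial>D \<partial>D \<partial>Pn) \<le> 2 * b k"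
proof -
  have sw: "(\<integral>S. \<integral>u. (\<lambda>T y. \<integral>v. \<bar>L T y - L (T(k:=v)) y\<bar> \<partial>D) (S(j:=u)) (S j) \<partial>D \<partial>Pn)
     = (\<integral>S. \<integral>u. (\<lambda>T y. \<integral>v. \<bar>L T y - L (T(k:=v)) y\<bar> \<partial>D) S u \<partial>D \<partial>Pn)"
    apply (rule swap[OF jn, where C="M"])
    subgoal by measurable
    subgoal by (rule prob_int_bnd[OF D]) simp
    done
  have "(\<integral>S. \<integral>u. \<integral>v. \<bar>L (S(j:=u)) (S j) - L (S(j:=u,k:=v)) (S j)\<bar> \<partial>D \<partial>D \<partial>Pn)
     = (\<integral>S. \<integral>u. \<integral>v. \<bar>L S u - L (S(k:=v)) u\<bar> \<partial>D \<partial>D \<partial>Pn)"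
    using sw by simp
  also have "\<dots> = (\<integral>S. \<integral>v. \<integral>u. \<bar>L S u - L (S(k:=v)) u\<bar> \<partial>D \<partial>D \<partial>Pn)"
    apply (rule inner_swap[where C="M"])
    subgoal by measurable
    subgoal by simp
    done
  also have "\<dots> \<le> 2 * b k" by (rule fresh[OF kn])
  finally show ?thesis .
qed

lemma T4b: "(\<integral>S. \<integral>u. \<integral>v. \<bar>L (S(k:=v)) (S k) - L (S(j:=u,k:=v)) (S k)\<bar> \<partial>D \<partial>D \<partial>Pn) \<le> 2 * b j"
proof -
  have sw: "(\<integral>S. \<integral>v. (\<lambda>T y. \<integral>u. \<bar>L T y - L (T(j:=u)) y\<bar> \<partial>D) (S(k:=v)) (S k) \<partial>D \<partial>Pn)
     = (\<integral>S. \<integral>v. (\<lambda>T y. \<integral>u. \<bar>L T y - L (T(j:=u)) y\<bar> \<partial>D) S v \<partial>D \<partial>Pn)"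
    apply (rule swap[OF kn, where C="M"])
    subgoal by measurable
    subgoal by (rule prob_int_bnd[OF D]) simp
    done
  have "(\<integral>S. \<integral>u. \<integral>v. \<bar>L (S(k:=v)) (S k) - L (S(j:=u,k:=v)) (S k)\<bar> \<partial>D \<partial>D \<partial>Pn)
     = (\<integral>S. \<integral>v. \<integral>u. \<bar>L (S(k:=v)) (S k) - L (S(j:=u,k:=v)) (S k)\<bar> \<partial>D \<partial>D \<partial>Pn)"
    apply (rule inner_swap[where C="M"])
    subgoal by measurable
    subgoal by simp
    done
  also have "\<dots> = (\<integral>S. \<integral>v. \<integral>u. \<bar>L S v - L (S(j:=u)) v\<bar> \<partial>D \<partial>D \<partial>Pn)"
    using sw jk by (simp add: fun_upd_twist)
  also have "\<dots> = (\<integral>S. \<integral>u. \<integral>v. \<bar>L S v - L (S(j:=u)) v\<bar> \<partial>D \<partial>D \<partial>Pn)"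
    apply (rule inner_swap[where C="M", symmetric])
    subgoal by measurable
    subgoal by simp
    done
  also have "\<dots> \<le> 2 * b j" by (rule fresh[OF jn])
  finally show ?thesis .
qed

lemma LL: "(\<integral>S. L S (S j) * L S (S k) \<partial>Pn) \<le> (\<integral>S. R S * R S \<partial>Pn) + 3*M*(b j + b k)"
proof -
  have MM: "\<bar>L T w * L T' w'\<bar> \<le> M*M" for T T' w w'
    unfolding abs_mult by (rule mult_mono) (auto simp: M0)
  have Mt: "\<bar>M * \<bar>L T w - L T' w'\<bar>\<bar> \<le> M*M" for T T' w w'
    unfolding abs_mult by (rule mult_mono) (auto simp: M0)
  have "(\<integral>S. L S (S j) * L S (S k) \<partial>Pn) = (\<integral>S. \<integral>u. \<integral>v. L S (S j) * L S (S k) \<partial>D \<partial>D \<partial>Pn)"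
    by (simp add: D.prob_space)
  also have "\<dots> \<le> (\<integral>S. \<integral>u. \<integral>v. L (S(j:=u,k:=v)) (S j) * L (S(j:=u,k:=v)) (S k)
      + M * \<bar>L S (S j) - L (S(j:=u)) (S j)\<bar> + M * \<bar>L (S(j:=u)) (S j) - L (S(j:=u,k:=v)) (S j)\<bar>
      + M * \<bar>L S (S k) - L (S(k:=v)) (S k)\<bar> + M * \<bar>L (S(k:=v)) (S k) - L (S(j:=u,k:=v)) (S k)\<bar> \<partial>D \<partial>D \<partial>Pn)"
    apply (rule trpl_le[where C="M*M" and C'="M*M + M*M + M*M + M*M + M*M"])
    subgoal by measurable
    subgoal by measurable
    subgoal by (rule MM)
    subgoal for S u w using MM[of "S(j:=u,k:=w)" "S j" "S(j:=u,k:=w)" "S k"] Mt[of S "S j" "S(j:=u)" "S j"]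
        Mt[of "S(j:=u)" "S j" "S(j:=u,k:=w)" "S j"] Mt[of S "S k" "S(k:=w)" "S k"]
        Mt[of "S(k:=w)" "S k" "S(j:=u,k:=w)" "S k"]
      by (auto simp: abs_le_iff)
    subgoal by (rule arith4) (auto simp: M0)
    done
  also have "\<dots> = (\<integral>S. \<integral>u. \<integral>v. L (S(j:=u,k:=v)) (S j) * L (S(j:=u,k:=v)) (S k) \<partial>D \<partial>D \<partial>Pn)
      + M * (\<integral>S. \<integral>u. \<integral>v. \<bar>L S (S j) - L (S(j:=u)) (S j)\<bar> \<partial>D \<partial>D \<partial>Pn)
      + M * (\<integral>S. \<integral>u. \<integral>v. \<bar>L (S(j:=u)) (S j) - L (S(j:=u,k:=v)) (S j)\<bar> \<partial>D \<partial>D \<partial>Pn)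
      + M * (\<integral>S. \<integral>u. \<integral>v. \<bar>L S (S k) - L (S(k:=v)) (S k)\<bar> \<partial>D \<partial>D \<partial>Pn)
      + M * (\<integral>S. \<integral>u. \<integral>v. \<bar>L (S(k:=v)) (S k) - L (S(j:=u,k:=v)) (S k)\<bar> \<partial>D \<partial>D \<partial>Pn)"
    apply (subst trpl_add5[where Ca="M*M" and Cb="M*M" and Cc="M*M" and Cd="M*M" and Ce="M*M"])
    apply (measurable)[5]
    apply (rule MM | rule Mt)+
    apply simp
    done
  also have "(\<integral>S. \<integral>u. \<integral>v. \<bar>L S (S j) - L (S(j:=u)) (S j)\<bar> \<partial>D \<partial>D \<partial>Pn) = b j"
    by (simp add: b_def D.prob_space)
  also have "(\<integral>S. \<integral>u. \<integral>v. \<bar>L S (S k) - L (S(k:=v)) (S k)\<bar> \<partial>D \<partial>D \<partial>Pn) = b k"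
    by (simp add: b_def D.prob_space)
  finally have *: "(\<integral>S. L S (S j) * L S (S k) \<partial>Pn) \<le> (\<integral>S. R S * R S \<partial>Pn) + M * b j
      + M * (\<integral>S. \<integral>u. \<integral>v. \<bar>L (S(j:=u)) (S j) - L (S(j:=u,k:=v)) (S j)\<bar> \<partial>D \<partial>D \<partial>Pn)
      + M * b k + M * (\<integral>S. \<integral>u. \<integral>v. \<bar>L (S(k:=v)) (S k) - L (S(j:=u,k:=v)) (S k)\<bar> \<partial>D \<partial>D \<partial>Pn)"
    unfolding LLz .
  have "M * (\<integral>S. \<integral>u. \<integral>v. \<bar>L (S(j:=u)) (S j) - L (S(j:=u,k:=v)) (S j)\<bar> \<partial>D \<partial>D \<partial>Pn) \<le> M * (2 * b k)"
    by (rule mult_left_mono[OF T2b M0])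
  moreover have "M * (\<integral>S. \<integral>u. \<integral>v. \<bar>L (S(k:=v)) (S k) - L (S(j:=u,k:=v)) (S k)\<bar> \<partial>D \<partial>D \<partial>Pn) \<le> M * (2 * b j)"
    by (rule mult_left_mono[OF T4b M0])
  ultimately show ?thesis using * by (simp add: algebra_simps)
qed

end
declare jk_in[simp del]



end


context stab begin
lemma b_nonneg: "0 \<le> b i"
  unfolding b_def by (rule integral_nonneg_AE, rule AE_I2, rule integral_nonneg_AE) simp

definition gg where "gg i S = R S - L S (S i)"

lemma gg_bnd: "\<bar>gg i S\<bar> \<le> M" unfolding gg_def by simp

lemma pair_bound:
  assumes jn: "j < n" and kn: "k < n"
  shows "(\<integral>S. gg j S * gg k S \<partial>Pn) \<le> (if j = k then M*M else 0) + 6*M*(b j + b k)"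
proof -
  have [simp]: "j \<in> {..<n}" "k \<in> {..<n}" "j < n" "k < n" using jn kn by auto
  have MM: "\<bar>gg j S * gg k S\<bar> \<le> M*M" for S
    unfolding abs_mult by (rule mult_mono) (auto simp: M0 gg_bnd)
  have bb: "0 \<le> 6*M*(b j + b k)" using M0 b_nonneg[of j] b_nonneg[of k] by simp
  show ?thesis
  proof (cases "j = k")
    case True
    have "(\<integral>S. gg j S * gg k S \<partial>Pn) \<le> M*M"
    proof -
      have "\<bar>\<integral>S. gg j S * gg k S \<partial>Pn\<bar> \<le> M*M" by (rule prob_int_bnd[OF PS]) (rule MM)
      then show ?thesis by linarith
    qed
    then show ?thesis using True bb by simp
  next
    case False
    have MR: "\<bar>R S * L S (S i)\<bar> \<le> M*M" "\<bar>R S * R S\<bar> \<le> M*M" "\<bar>L S (S j) * L S (S k)\<bar> \<le> M*M" for S i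
      unfolding abs_mult by (rule mult_mono; simp add: M0)+
    have i1: "integrable Pn (\<lambda>S. R S * R S)"
      by (rule intg_bound[OF P.finite_measure_axioms _ MR(2)]) measurable
    have i2: "integrable Pn (\<lambda>S. R S * L S (S j))"
      by (rule intg_bound[OF P.finite_measure_axioms _ MR(1)]) measurable
    have i3: "integrable Pn (\<lambda>S. R S * L S (S k))"
      by (rule intg_bound[OF P.finite_measure_axioms _ MR(1)]) measurable
    have i4: "integrable Pn (\<lambda>S. L S (S j) * L S (S k))"
      by (rule intg_bound[OF P.finite_measure_axioms _ MR(3)]) measurable
    have "(\<integral>S. gg j S * gg k S \<partial>Pn) = (\<integral>S. R S * R S - R S * L S (S k) - R S * L S (S j) + L S (S j) * L S (S k) \<partial>Pn)"
      by (simp add: gg_def algebra_simps)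
    also have "\<dots> = (\<integral>S. R S * R S \<partial>Pn) - (\<integral>S. R S * L S (S k) \<partial>Pn) - (\<integral>S. R S * L S (S j) \<partial>Pn) + (\<integral>S. L S (S j) * L S (S k) \<partial>Pn)"
      using i1 i2 i3 i4 by simp
    also have "\<dots> \<le> 6*M*(b j + b k)"
      using RL[OF jn] RL[OF kn] LL[OF jn kn False] by (simp add: algebra_simps)
    finally show ?thesis using False by simp
  qed
qed


lemma var_bound:
  assumes n0: "0 < n"
  shows "(\<integral>S. (R S - (1 / real n) * (\<Sum>i<n. L S (S i)))\<^sup>2 \<partial>Pn) \<le> M\<^sup>2 / real n + 12 * M / real n * (\<Sum>i<n. b i)"
proof -
  have pt: "(R S - (1 / real n) * (\<Sum>i<n. L S (S i)))\<^sup>2 = (1 / real n)\<^sup>2 * (\<Sum>j<n. \<Sum>k<n. gg j S * gg k S)" for S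
  proof -
    have "R S - (1 / real n) * (\<Sum>i<n. L S (S i)) = (1 / real n) * (\<Sum>i<n. gg i S)"
      using n0 by (simp add: gg_def sum_subtractf field_simps)
    then show ?thesis by (simp add: power_mult_distrib power2_eq_square sum_product)
  qed
  have ij: "integrable Pn (\<lambda>S. gg j S * gg k S)" if "j < n" "k < n" for j k
  proof -
    have [simp]: "j \<in> {..<n}" "k \<in> {..<n}" "j < n" "k < n" using that by auto
    have m: "(\<lambda>S. gg j S * gg k S) \<in> borel_measurable Pn" unfolding gg_def by measurable
    show ?thesis
      by (rule intg_bound[OF P.finite_measure_axioms m, where C="M*M"])
        (unfold abs_mult, rule mult_mono, auto simp: M0 gg_bnd)
  qed
  have "(\<integral>S. (R S - (1 / real n) * (\<Sum>i<n. L S (S i)))\<^sup>2 \<partial>Pn) = (1 / real n)\<^sup>2 * (\<Sum>j<n. \<Sum>k<n. \<integral>S. gg j S * gg k S \<partial>Pn)"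
  proof -
    have "(\<integral>S. (\<Sum>j<n. \<Sum>k<n. gg j S * gg k S) \<partial>Pn) = (\<Sum>j<n. \<integral>S. (\<Sum>k<n. gg j S * gg k S) \<partial>Pn)"
      by (rule Bochner_Integration.integral_sum) (auto intro!: Bochner_Integration.integrable_sum ij)
    also have "\<dots> = (\<Sum>j<n. \<Sum>k<n. \<integral>S. gg j S * gg k S \<partial>Pn)"
      by (rule sum.cong[OF refl], rule Bochner_Integration.integral_sum) (auto intro!: ij)
    finally show ?thesis unfolding pt by simp
  qed
  also have "\<dots> \<le> (1 / real n)\<^sup>2 * (\<Sum>j<n. \<Sum>k<n. (if j = k then M*M else 0) + 6*M*(b j + b k))"
    by (intro mult_left_mono sum_mono pair_bound) auto
  also have "(\<Sum>j<n. \<Sum>k<n. (if j = k then M*M else 0) + 6*M*(b j + b k)) = real n * (M*M) + 12 * M * real n * (\<Sum>i<n. b i)"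
    by (simp add: sum.distrib sum_distrib_left sum.swap[of "\<lambda>j k. b k"] algebra_simps)
  also have "(1 / real n)\<^sup>2 * (real n * (M*M) + 12 * M * real n * (\<Sum>i<n. b i)) = M\<^sup>2 / real n + 12 * M / real n * (\<Sum>i<n. b i)"
    using n0 by (simp add: power2_eq_square field_simps)
  finally show ?thesis .
qed

end



lemma lam_trick:
  fixes f g l :: real assumes "0 < l"
  shows "f * g \<le> (l * f\<^sup>2 + g\<^sup>2 / l) / 2"
proof -
  have "0 \<le> (l*f - g)\<^sup>2" by simp
  then have "2 * l * (f * g) \<le> l\<^sup>2 * f\<^sup>2 + g\<^sup>2" by (simp add: power2_eq_square algebra_simps)
  then have "f * g \<le> (l\<^sup>2 * f\<^sup>2 + g\<^sup>2) / (2*l)" using assms by (simp add: field_simps)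
  also have "\<dots> = (l * f\<^sup>2 + g\<^sup>2 / l) / 2" using assms by (simp add: field_simps power2_eq_square)
  finally show ?thesis .
qed

lemma pac_step:
  fixes g :: "'p \<Rightarrow> real"
  assumes P: "prob_space P" and Q: "prob_space Q" and sQ: "sets Q = sets P"
    and chi: "chi_square Q P < \<infinity>"
    and gm: "g \<in> borel_measurable P" and gb: "\<And>\<theta>. \<bar>g \<theta>\<bar> \<le> K"
    and g2: "(\<integral>\<theta>. (g \<theta>)\<^sup>2 \<partial>P) \<le> c" and c0: "0 < c"
  shows "(\<integral>\<theta>. g \<theta> \<partial>Q) \<le> sqrt ((real_of_ereal (chi_square Q P) + 1) * c)"
proof -
  interpret P: prob_space P by (rule P)
  interpret Q: prob_space Q by (rule Q)
  have ac: "absolutely_continuous P Q"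
    using chi by (auto simp: chi_square_def split: if_splits)
  define X where "X = (\<integral>\<^sup>+ \<theta>. (RN_deriv P Q \<theta>)\<^sup>2 \<partial>P)"
  have chiX: "chi_square Q P = enn2ereal X - 1" using ac by (simp add: chi_square_def X_def)
  have Xfin: "X \<noteq> \<top>"
  proof
    assume "X = \<top>" then have "chi_square Q P = \<infinity>" using chiX by simp
    then show False using chi by simp
  qed
  have sfQ: "sigma_finite_measure Q" by (rule prob_space_imp_sigma_finite[OF Q])
  have fin: "AE \<theta> in P. RN_deriv P Q \<theta> \<noteq> \<infinity>"
    by (rule P.RN_deriv_finite[OF sfQ ac sQ])
  define fr where "fr \<theta> = enn2real (RN_deriv P Q \<theta>)" for \<theta>
  have frm[measurable]: "fr \<in> borel_measurable P" unfolding fr_def by measurable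
  have fr0: "0 \<le> fr \<theta>" for \<theta> by (simp add: fr_def)
  have X2: "X = (\<integral>\<^sup>+ \<theta>. ennreal ((fr \<theta>)\<^sup>2) \<partial>P)"
    unfolding X_def
  proof (rule nn_integral_cong_AE)
    show "AE x in P. (RN_deriv P Q x)\<^sup>2 = ennreal ((fr x)\<^sup>2)"
      using fin by eventually_elim (auto simp: fr_def ennreal_power[symmetric] less_top)
  qed
  have i2: "integrable P (\<lambda>\<theta>. (fr \<theta>)\<^sup>2)"
    by (rule integrableI_nonneg) (use X2 Xfin in \<open>auto simp: less_top\<close>)
  define a where "a = (\<integral>\<theta>. (fr \<theta>)\<^sup>2 \<partial>P)"
  have Xa: "X = ennreal a" unfolding X2 a_def by (rule nn_integral_eq_integral[OF i2]) simp
  have a0: "0 \<le> a" unfolding a_def by simp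
  have chia: "real_of_ereal (chi_square Q P) + 1 = a"
    using a0 unfolding chiX Xa by (simp add: one_ereal_def)
  have i1: "integrable P fr"
    using P.RN_deriv_integrable[OF sfQ ac sQ, of "\<lambda>_. 1"] by (simp add: fr_def[abs_def])
  have int1: "(\<integral>\<theta>. fr \<theta> \<partial>P) = 1"
    using P.RN_deriv_integral[OF sfQ ac sQ, of "\<lambda>_. 1"] by (simp add: fr_def Q.prob_space)
  have a1: "1 \<le> a"
  proof -
    have "(\<integral>\<theta>. 2 * fr \<theta> - 1 \<partial>P) \<le> a" unfolding a_def
    proof (rule integral_mono)
      show "integrable P (\<lambda>\<theta>. 2 * fr \<theta> - 1)" using i1 by simp
      show "integrable P (\<lambda>\<theta>. (fr \<theta>)\<^sup>2)" by (rule i2)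
      fix \<theta> have "0 \<le> (fr \<theta> - 1)\<^sup>2" by simp
      then show "2 * fr \<theta> - 1 \<le> (fr \<theta>)\<^sup>2" by (simp add: power2_eq_square algebra_simps)
    qed
    moreover have "(\<integral>\<theta>. 2 * fr \<theta> - 1 \<partial>P) = 1" using i1 int1 by (simp add: P.prob_space)
    ultimately show ?thesis by simp
  qed
  have gQ: "g \<in> borel_measurable Q" using gm measurable_cong_sets[OF sQ refl] by blast
  have iQ: "integrable Q g"
    by (rule intg_bound[OF Q.finite_measure_axioms gQ]) (rule gb)
  have ifg: "integrable P (\<lambda>\<theta>. fr \<theta> * g \<theta>)"
    using P.RN_deriv_integrable[OF sfQ ac sQ gm] iQ by (simp add: fr_def)
  have eqQ: "(\<integral>\<theta>. g \<theta> \<partial>Q) = (\<integral>\<theta>. fr \<theta> * g \<theta> \<partial>P)"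
    using P.RN_deriv_integral[OF sfQ ac sQ gm] by (simp add: fr_def)
  have ig2: "integrable P (\<lambda>\<theta>. (g \<theta>)\<^sup>2)"
    apply (rule intg_bound[OF P.finite_measure_axioms, where C="K*K"])
    subgoal using gm by measurable
    subgoal for x
    proof -
      have "\<bar>g x\<bar> * \<bar>g x\<bar> \<le> K * K" by (rule mult_mono) (use gb[of x] in auto)
      then show ?thesis by (simp add: power2_eq_square abs_mult)
    qed
    done
  define l where "l = sqrt c / sqrt a"
  have l0: "0 < l" using c0 a1 by (simp add: l_def)
  have "(\<integral>\<theta>. fr \<theta> * g \<theta> \<partial>P) \<le> (\<integral>\<theta>. (l * (fr \<theta>)\<^sup>2 + (g \<theta>)\<^sup>2 / l) / 2 \<partial>P)"
    by (rule integral_mono[OF ifg]) (use i2 ig2 in simp, rule lam_trick[OF l0])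
  also have "\<dots> = (l * a + (\<integral>\<theta>. (g \<theta>)\<^sup>2 \<partial>P) / l) / 2"
    using i2 ig2 by (simp add: a_def)
  also have "\<dots> \<le> (l * a + c / l) / 2"
    using g2 l0 by (simp add: divide_right_mono)
  also have "\<dots> = sqrt a * sqrt c"
  proof -
    have sa: "sqrt a * sqrt a = a" "0 < sqrt a" using a1 by auto
    have sc: "sqrt c * sqrt c = c" "0 < sqrt c" using c0 by auto
    show ?thesis unfolding l_def using sa sc
      by (simp add: field_simps)
  qed
  also have "\<dots> = sqrt ((real_of_ereal (chi_square Q P) + 1) * c)"
    by (simp add: chia real_sqrt_mult)
  finally show ?thesis using eqQ by simp
qed




lemma upd_meas_gen:
  "i < n \<Longrightarrow> f \<in> measurable N (PiM {..<n} (\<lambda>_. D)) \<Longrightarrow> h \<in> measurable N D \<Longrightarrow>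
   (\<lambda>x. (f x)(i := h x)) \<in> measurable N (PiM {..<n} (\<lambda>_. D))"
  by (intro measurable_fun_upd[where J="{..<n}"]) auto

locale full =
  fixes D :: "'z measure" and P :: "'p measure" and n :: nat
    and loss :: "'h \<Rightarrow> 'z \<Rightarrow> real" and A :: "(nat \<Rightarrow> 'z) \<Rightarrow> 'p \<Rightarrow> 'h" and M :: real
  assumes D: "prob_space D" and P: "prob_space P"
    and lb: "\<And>h z. 0 \<le> loss h z \<and> loss h z \<le> M"
    and meas: "(\<lambda>(S, \<theta>, z). loss (A S \<theta>) z) \<in> borel_measurable (sample_measure n D \<Otimes>\<^sub>M P \<Otimes>\<^sub>M D)"
begin

sublocale D: prob_space D by (rule D)
sublocale PP: prob_space P by (rule P)

abbreviation "Pn \<equiv> PiM {..<n} (\<lambda>_. D)"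

lemma PSn: "prob_space Pn" by (rule prob_space_PiM) (use D in auto)
sublocale Sn: prob_space Pn by (rule PSn)
sublocale SP: pair_sigma_finite Pn P ..
sublocale DP: pair_sigma_finite D P ..

lemma loss_meas[measurable (raw)]:
  "f \<in> measurable N Pn \<Longrightarrow> g \<in> measurable N P \<Longrightarrow> h \<in> measurable N D \<Longrightarrow>
   (\<lambda>x. loss (A (f x) (g x)) (h x)) \<in> borel_measurable N"
proof -
  assume f: "f \<in> measurable N Pn" and g: "g \<in> measurable N P" and h: "h \<in> measurable N D"
  have "(\<lambda>x. (f x, g x, h x)) \<in> measurable N (Pn \<Otimes>\<^sub>M P \<Otimes>\<^sub>M D)"
    using f g h by measurable
  from measurable_compose[OF this meas[unfolded sample_measure_def]] show ?thesis by simp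
qed

lemma M0: "0 \<le> M" using lb[of undefined undefined] by linarith

lemma inst:
  assumes th: "\<theta> \<in> space P"
  shows "stab D n (\<lambda>S z. loss (A S \<theta>) z) M"
proof -
  have "(\<lambda>x. loss (A (fst x) \<theta>) (snd x)) \<in> borel_measurable (Pn \<Otimes>\<^sub>M D)"
    by (rule loss_meas) (auto intro: measurable_const[OF th])
  then show ?thesis
    by (intro stab.intro[OF D]) (use lb in \<open>auto simp: case_prod_beta'\<close>)
qed

definition bb where
  "bb i \<theta> = (\<integral>S. \<integral>z. \<bar>loss (A S \<theta>) (S i) - loss (A (S(i:=z)) \<theta>) (S i)\<bar> \<partial>D \<partial>Pn)"

lemma var_theta:
  assumes th: "\<theta> \<in> space P" and n0: "0 < n"
  shows "(\<integral>S. (gen_gap n D loss A S \<theta>)\<^sup>2 \<partial>Pn) \<le> M\<^sup>2 / real n + 12 * M / real n * (\<Sum>i<n. bb i \<theta>)"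
proof -
  interpret I: stab D n "\<lambda>S z. loss (A S \<theta>) z" M by (rule inst[OF th])
  have "I.b i = bb i \<theta>" for i by (simp add: I.b_def bb_def)
  moreover have "gen_gap n D loss A S \<theta> = I.R S - (1 / real n) * (\<Sum>i<n. loss (A S \<theta>) (S i))" for S
    by (simp add: gen_gap_def risk_def emp_risk_def I.R_def)
  ultimately show ?thesis using I.var_bound[OF n0] by simp
qed

lemma Phi_meas[measurable]: "(\<lambda>x. gen_gap n D loss A (fst x) (snd x)) \<in> borel_measurable (Pn \<Otimes>\<^sub>M P)"
proof -
  have "(\<lambda>x. \<integral>z. loss (A (fst x) (snd x)) z \<partial>D) \<in> borel_measurable (Pn \<Otimes>\<^sub>M P)"
    by measurable
  moreover have "(\<lambda>x. loss (A (fst x) (snd x)) (fst x i)) \<in> borel_measurable (Pn \<Otimes>\<^sub>M P)" if "i < n" for i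
  proof -
    have [simp]: "i \<in> {..<n}" "i < n" using that by auto
    show ?thesis by measurable
  qed
  ultimately show ?thesis
    unfolding gen_gap_def risk_def emp_risk_def by measurable
qed


lemma risk_bnd: "0 \<le> risk D loss A S \<theta>" "risk D loss A S \<theta> \<le> M"
proof -
  show "0 \<le> risk D loss A S \<theta>" unfolding risk_def by (rule integral_nonneg_AE) (simp add: lb)
  show "risk D loss A S \<theta> \<le> M"
  proof (cases "integrable D (loss (A S \<theta>))")
    case True
    have "risk D loss A S \<theta> \<le> (\<integral>w. M \<partial>D)" unfolding risk_def
      by (rule integral_mono[OF True]) (auto simp: lb)
    then show ?thesis by (simp add: D.prob_space)
  next
    case False then show ?thesis by (simp add: risk_def not_integrable_integral_eq M0)
  qed
qed

lemma emp_bnd: assumes "0 < n" shows "0 \<le> emp_risk n loss A S \<theta>" "emp_risk n loss A S \<theta> \<le> M"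
proof -
  have s0: "0 \<le> (\<Sum>i<n. loss (A S \<theta>) (S i))" by (rule sum_nonneg) (simp add: lb)
  have s1: "(\<Sum>i<n. loss (A S \<theta>) (S i)) \<le> real n * M"
    using sum_mono[of "{..<n}" "\<lambda>i. loss (A S \<theta>) (S i)" "\<lambda>_. M"] lb by simp
  show "0 \<le> emp_risk n loss A S \<theta>" unfolding emp_risk_def using s0 by simp
  show "emp_risk n loss A S \<theta> \<le> M" unfolding emp_risk_def using s1 assms
    by (simp add: field_simps)
qed

lemma gap_bnd: "0 < n \<Longrightarrow> \<bar>gen_gap n D loss A S \<theta>\<bar> \<le> M"
  unfolding gen_gap_def using risk_bnd[of S \<theta>] emp_bnd[of S \<theta>] by auto

lemma labs: "\<bar>\<bar>loss h z - loss h' z'\<bar>\<bar> \<le> M"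
  using lb[of h z] lb[of h' z'] by (auto simp: abs_le_iff)

lemma bb_bnd: "\<bar>bb i \<theta>\<bar> \<le> M"
  unfolding bb_def
  by (rule prob_int_bnd[OF PSn], rule prob_int_bnd[OF D]) (rule labs)

lemma bb_le:
  assumes stable: "pointwise_hyp_stable n D P loss A \<beta>" and i: "i < n"
  shows "(\<integral>\<theta>. bb i \<theta> \<partial>P) \<le> \<beta>"
proof -
  note upd[measurable (raw)] = upd_meas_gen[where D=D, OF i]
  have [simp]: "i \<in> {..<n}" "i < n" using i by auto
  have Fb: "\<bar>\<bar>loss (A S \<theta>) (S i) - loss (A (S(i:=z)) \<theta>) (S i)\<bar>\<bar> \<le> M" for S z \<theta>
    using lb[of "A S \<theta>" "S i"] lb[of "A (S(i:=z)) \<theta>" "S i"] by (auto simp: abs_le_iff)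
  have Gb: "\<bar>\<integral>z. \<bar>loss (A S \<theta>) (S i) - loss (A (S(i:=z)) \<theta>) (S i)\<bar> \<partial>D\<bar> \<le> M" for S \<theta>
    by (rule prob_int_bnd[OF D]) (use Fb in simp)
  have "(\<integral>\<theta>. bb i \<theta> \<partial>P) = (\<integral>\<theta>. \<integral>S. \<integral>z. \<bar>loss (A S \<theta>) (S i) - loss (A (S(i:=z)) \<theta>) (S i)\<bar> \<partial>D \<partial>Pn \<partial>P)"
    by (simp add: bb_def)
  also have "\<dots> = (\<integral>S. \<integral>\<theta>. \<integral>z. \<bar>loss (A S \<theta>) (S i) - loss (A (S(i:=z)) \<theta>) (S i)\<bar> \<partial>D \<partial>P \<partial>Pn)"
  proof (rule SP.Fubini_integral)
    have m: "(\<lambda>x. \<integral>z. \<bar>loss (A (fst x) (snd x)) (fst x i) - loss (A ((fst x)(i:=z)) (snd x)) (fst x i)\<bar> \<partial>D) \<in> borel_measurable (Pn \<Otimes>\<^sub>M P)"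
      by measurable
    have "integrable (Pn \<Otimes>\<^sub>M P) (\<lambda>x. \<integral>z. \<bar>loss (A (fst x) (snd x)) (fst x i) - loss (A ((fst x)(i:=z)) (snd x)) (fst x i)\<bar> \<partial>D)"
      by (rule intg_bound[OF prob_space.finite_measure[OF prob_space_pair[OF PSn P]] m]) (rule Gb)
    then show "integrable (Pn \<Otimes>\<^sub>M P) (\<lambda>(S, \<theta>). \<integral>z. \<bar>loss (A S \<theta>) (S i) - loss (A (S(i:=z)) \<theta>) (S i)\<bar> \<partial>D)"
      by (simp add: case_prod_beta')
  qed
  also have "\<dots> = (\<integral>S. \<integral>z. \<integral>\<theta>. \<bar>loss (A S \<theta>) (S i) - loss (A (S(i:=z)) \<theta>) (S i)\<bar> \<partial>P \<partial>D \<partial>Pn)"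
  proof (rule Bochner_Integration.integral_cong[OF refl])
    fix S assume S: "S \<in> space Pn"
    have [measurable]: "(\<lambda>x. S) \<in> measurable (D \<Otimes>\<^sub>M P) Pn" using S by simp
    have m: "(\<lambda>x. \<bar>loss (A S (snd x)) (S i) - loss (A (S(i:=fst x)) (snd x)) (S i)\<bar>) \<in> borel_measurable (D \<Otimes>\<^sub>M P)"
      by measurable
    have "integrable (D \<Otimes>\<^sub>M P) (\<lambda>x. \<bar>loss (A S (snd x)) (S i) - loss (A (S(i:=fst x)) (snd x)) (S i)\<bar>)"
      by (rule intg_bound[OF prob_space.finite_measure[OF prob_space_pair[OF D P]] m]) (rule Fb)
    then have "integrable (D \<Otimes>\<^sub>M P) (\<lambda>(z, \<theta>). \<bar>loss (A S \<theta>) (S i) - loss (A (S(i:=z)) \<theta>) (S i)\<bar>)"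
      by (simp add: case_prod_beta')
    from DP.Fubini_integral[OF this]
    show "(\<integral>\<theta>. \<integral>z. \<bar>loss (A S \<theta>) (S i) - loss (A (S(i:=z)) \<theta>) (S i)\<bar> \<partial>D \<partial>P)
        = (\<integral>z. \<integral>\<theta>. \<bar>loss (A S \<theta>) (S i) - loss (A (S(i:=z)) \<theta>) (S i)\<bar> \<partial>P \<partial>D)" .
  qed
  also have "\<dots> \<le> \<beta>"
    using stable i unfolding pointwise_hyp_stable_def sample_measure_def by blast
  finally show ?thesis .
qed


lemma bb_integrable:
  assumes i: "i < n"
  shows "integrable P (bb i)"
proof -
  note upd[measurable (raw)] = upd_meas_gen[where D=D, OF i]
  have [simp]: "i \<in> {..<n}" "i < n" using i by auto
  have Gb: "\<bar>\<integral>z. \<bar>loss (A S \<theta>) (S i) - loss (A (S(i:=z)) \<theta>) (S i)\<bar> \<partial>D\<bar> \<le> M" for S \<theta>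
    by (rule prob_int_bnd[OF D]) (rule labs)
  have m: "(\<lambda>x. \<integral>z. \<bar>loss (A (fst x) (snd x)) (fst x i) - loss (A ((fst x)(i:=z)) (snd x)) (fst x i)\<bar> \<partial>D) \<in> borel_measurable (Pn \<Otimes>\<^sub>M P)"
    by measurable
  have "integrable (Pn \<Otimes>\<^sub>M P) (\<lambda>x. \<integral>z. \<bar>loss (A (fst x) (snd x)) (fst x i) - loss (A ((fst x)(i:=z)) (snd x)) (fst x i)\<bar> \<partial>D)"
    by (rule intg_bound[OF prob_space.finite_measure[OF prob_space_pair[OF PSn P]] m]) (rule Gb)
  then have "integrable (Pn \<Otimes>\<^sub>M P) (\<lambda>(S, \<theta>). \<integral>z. \<bar>loss (A S \<theta>) (S i) - loss (A (S(i:=z)) \<theta>) (S i)\<bar> \<partial>D)"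
    by (simp add: case_prod_beta')
  from SP.integrable_snd[OF this] show ?thesis by (simp add: bb_def[abs_def])
qed

lemma main_E:
  assumes stable: "pointwise_hyp_stable n D P loss A \<beta>" and n0: "0 < n"
  shows "(\<integral>S. (\<integral>\<theta>. (gen_gap n D loss A S \<theta>)\<^sup>2 \<partial>P) \<partial>Pn) \<le> M\<^sup>2 / real n + 12 * M * \<beta>"
proof -
  have b2: "\<bar>(gen_gap n D loss A S \<theta>)\<^sup>2\<bar> \<le> M*M" for S \<theta>
  proof -
    have "\<bar>gen_gap n D loss A S \<theta>\<bar> * \<bar>gen_gap n D loss A S \<theta>\<bar> \<le> M * M"
      by (rule mult_mono) (use gap_bnd[OF n0, of S \<theta>] in auto)
    then show ?thesis by (simp add: power2_eq_square abs_mult)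
  qed
  have m: "(\<lambda>x. (gen_gap n D loss A (fst x) (snd x))\<^sup>2) \<in> borel_measurable (Pn \<Otimes>\<^sub>M P)" by measurable
  have "integrable (Pn \<Otimes>\<^sub>M P) (\<lambda>x. (gen_gap n D loss A (fst x) (snd x))\<^sup>2)"
    by (rule intg_bound[OF prob_space.finite_measure[OF prob_space_pair[OF PSn P]] m]) (rule b2)
  then have iSP: "integrable (Pn \<Otimes>\<^sub>M P) (\<lambda>(S, \<theta>). (gen_gap n D loss A S \<theta>)\<^sup>2)"
    by (simp add: case_prod_beta')
  have ib: "integrable P (bb i)" if "i \<in> {..<n}" for i using bb_integrable that by simp
  have "(\<integral>S. (\<integral>\<theta>. (gen_gap n D loss A S \<theta>)\<^sup>2 \<partial>P) \<partial>Pn) = (\<integral>\<theta>. (\<integral>S. (gen_gap n D loss A S \<theta>)\<^sup>2 \<partial>Pn) \<partial>P)"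
    by (rule SP.Fubini_integral[OF iSP, symmetric])
  also have "\<dots> \<le> (\<integral>\<theta>. M\<^sup>2 / real n + 12 * M / real n * (\<Sum>i<n. bb i \<theta>) \<partial>P)"
  proof (rule integral_mono)
    show "integrable P (\<lambda>\<theta>. \<integral>S. (gen_gap n D loss A S \<theta>)\<^sup>2 \<partial>Pn)" by (rule SP.integrable_snd[OF iSP])
    show "integrable P (\<lambda>\<theta>. M\<^sup>2 / real n + 12 * M / real n * (\<Sum>i<n. bb i \<theta>))"
      by (intro Bochner_Integration.integrable_add PP.integrable_const
          Bochner_Integration.integrable_mult_right Bochner_Integration.integrable_sum ib)
    fix \<theta> assume "\<theta> \<in> space P"
    then show "(\<integral>S. (gen_gap n D loss A S \<theta>)\<^sup>2 \<partial>Pn) \<le> M\<^sup>2 / real n + 12 * M / real n * (\<Sum>i<n. bb i \<theta>)"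
      by (rule var_theta[OF _ n0])
  qed
  also have "\<dots> = (\<integral>\<theta>. M\<^sup>2 / real n \<partial>P) + (\<integral>\<theta>. 12 * M / real n * (\<Sum>i<n. bb i \<theta>) \<partial>P)"
    by (rule Bochner_Integration.integral_add[OF PP.integrable_const Bochner_Integration.integrable_mult_right[OF Bochner_Integration.integrable_sum[OF ib]]])
  also have "\<dots> = M\<^sup>2 / real n + 12 * M / real n * (\<integral>\<theta>. (\<Sum>i<n. bb i \<theta>) \<partial>P)"
    by (simp add: PP.prob_space)
  also have "\<dots> = M\<^sup>2 / real n + 12 * M / real n * (\<Sum>i<n. (\<integral>\<theta>. bb i \<theta> \<partial>P))"
    by (simp only: Bochner_Integration.integral_sum[OF ib])
  also have "\<dots> \<le> M\<^sup>2 / real n + 12 * M / real n * (\<Sum>i<n. \<beta>)"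
    using bb_le[OF stable] M0 by (intro add_left_mono mult_left_mono sum_mono) auto
  also have "\<dots> = M\<^sup>2 / real n + 12 * M * \<beta>" using n0 by simp
  finally show ?thesis .
qed

end

theorem theorem1:
  fixes D :: "'z measure" and P :: "'p measure"
    and loss :: "'h \<Rightarrow> 'z \<Rightarrow> real" and A :: "(nat \<Rightarrow> 'z) \<Rightarrow> 'p \<Rightarrow> 'h"
    and M \<beta> \<delta> :: real and n :: nat
  assumes D: "prob_space D"
    and P: "prob_space P"
    and loss_bounded: "\<And>h z. 0 \<le> loss h z \<and> loss h z \<le> M"
    and meas: "(\<lambda>(S, \<theta>, z). loss (A S \<theta>) z)
               \<in> borel_measurable (sample_measure n D \<Otimes>\<^sub>M P \<Otimes>\<^sub>M D)"
    and stable: "pointwise_hyp_stable n D P loss A \<beta>"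
    and n: "n \<ge> 1"
    and \<delta>: "0 < \<delta>" "\<delta> < 1"
  shows "\<exists>E \<in> sets (sample_measure n D).
           measure (sample_measure n D) E \<ge> 1 - \<delta> \<and>
           (\<forall>S \<in> E. \<forall>Q. prob_space Q \<and> sets Q = sets P \<and> chi_square Q P < \<infinity> \<longrightarrow>
              gen_gap_post n D loss A S Q
                \<le> sqrt (((real_of_ereal (chi_square Q P) + 1) / \<delta>)
                         * (2 * M\<^sup>2 / real n + 12 * M * \<beta>)))"
proof -
  interpret F: full D P n loss A M
    by (rule full.intro) (use D P loss_bounded meas in auto)
  let ?Pn = "PiM {..<n} (\<lambda>_. D)"
  have SM: "sample_measure n D = ?Pn" by (simp add: sample_measure_def)
  have n0: "0 < n" using n by simp
  have M0: "0 \<le> M" by (rule F.M0)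
  have beta0: "0 \<le> \<beta>"
  proof -
    have "0 \<le> (\<integral>S. (\<integral>z. (\<integral>\<theta>. \<bar>loss (A S \<theta>) (S 0) - loss (A (S(0 := z)) \<theta>) (S 0)\<bar> \<partial>P) \<partial>D) \<partial>sample_measure n D)"
      by (intro integral_nonneg_AE AE_I2) simp
    also have "\<dots> \<le> \<beta>" using stable n0 unfolding pointwise_hyp_stable_def by blast
    finally show ?thesis .
  qed
  define W where "W S = (\<integral>\<theta>. (gen_gap n D loss A S \<theta>)\<^sup>2 \<partial>P)" for S
  have Wm[measurable]: "W \<in> borel_measurable ?Pn"
  proof -
    have "(\<lambda>x. (gen_gap n D loss A (fst x) (snd x))\<^sup>2) \<in> borel_measurable (?Pn \<Otimes>\<^sub>M P)" by measurable
    then have "case_prod (\<lambda>S \<theta>. (gen_gap n D loss A S \<theta>)\<^sup>2) \<in> borel_measurable (?Pn \<Otimes>\<^sub>M P)"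
      by (simp add: case_prod_beta')
    from F.PP.borel_measurable_lebesgue_integral[OF this] show ?thesis by (simp add: W_def[abs_def])
  qed
  have W0: "0 \<le> W S" for S unfolding W_def by (rule integral_nonneg_AE) simp
  have Wb: "\<bar>W S\<bar> \<le> M * M" for S unfolding W_def
  proof (rule prob_int_bnd[OF P])
    fix \<theta>
    have "\<bar>gen_gap n D loss A S \<theta>\<bar> * \<bar>gen_gap n D loss A S \<theta>\<bar> \<le> M * M"
      by (rule mult_mono) (use F.gap_bnd[OF n0, of S \<theta>] in auto)
    then show "\<bar>(gen_gap n D loss A S \<theta>)\<^sup>2\<bar> \<le> M * M" by (simp add: power2_eq_square abs_mult)
  qed
  have EW: "(\<integral>S. W S \<partial>?Pn) \<le> M\<^sup>2 / real n + 12 * M * \<beta>"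
    unfolding W_def by (rule F.main_E[OF stable n0])
  define B where "B = 2 * M\<^sup>2 / real n + 12 * M * \<beta>"
  show ?thesis
  proof (cases "M = 0")
    case True
    have gz: "gen_gap n D loss A S \<theta> = 0" for S \<theta> using F.gap_bnd[OF n0, of S \<theta>] True by simp
    show ?thesis
    proof (rule bexI[where x="space (sample_measure n D)"], intro conjI ballI allI impI)
      show "1 - \<delta> \<le> measure (sample_measure n D) (space (sample_measure n D))"
        using F.Sn.prob_space \<delta> unfolding SM by simp
      fix S Q
      show "gen_gap_post n D loss A S Q \<le> sqrt ((real_of_ereal (chi_square Q P) + 1) / \<delta> * (2 * M\<^sup>2 / real n + 12 * M * \<beta>))"
        using True by (simp add: gen_gap_post_def gz)
    qed simp
  next
    case False
    then have Mp: "0 < M" using M0 by simp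
    have Bp: "0 < B" unfolding B_def using Mp n0 beta0 by (simp add: add_pos_nonneg)
    define c where "c = B / \<delta>"
    have cp: "0 < c" unfolding c_def using Bp \<delta> by simp
    define E where "E = {S \<in> space ?Pn. W S \<le> c}"
    have Es: "E \<in> sets ?Pn" unfolding E_def by measurable
    have iW: "integrable ?Pn W"
      by (rule intg_bound[OF F.Sn.finite_measure_axioms Wm]) (rule Wb)
    have "measure ?Pn {S \<in> space ?Pn. W S \<ge> c} \<le> (\<integral>S. W S \<partial>?Pn) / c"
      by (rule integral_Markov_inequality_measure[OF iW Es]) (auto simp: W0 cp)
    also have "\<dots> \<le> B / c"
    proof (rule divide_right_mono)
      have "0 \<le> M\<^sup>2 / real n" by simp
      then show "(\<integral>S. W S \<partial>?Pn) \<le> B" using EW unfolding B_def by linarith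
    qed (use cp in simp)
    also have "\<dots> = \<delta>" unfolding c_def using Bp \<delta> by simp
    finally have mk: "measure ?Pn {S \<in> space ?Pn. W S \<ge> c} \<le> \<delta>" .
    have "measure ?Pn (space ?Pn - E) \<le> measure ?Pn {S \<in> space ?Pn. W S \<ge> c}"
      by (rule F.Sn.finite_measure_mono) (auto simp: E_def)
    then have mE: "1 - \<delta> \<le> measure ?Pn E"
      using mk F.Sn.prob_compl[OF Es] by simp
    show ?thesis
    proof (rule bexI[where x=E], intro conjI ballI allI impI)
      show "E \<in> sets (sample_measure n D)" using Es SM by simp
      show "1 - \<delta> \<le> measure (sample_measure n D) E" using mE SM by simp
      fix S Q assume S: "S \<in> E" and Qc: "prob_space Q \<and> sets Q = sets P \<and> chi_square Q P < \<infinity>"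
      have Sp: "S \<in> space ?Pn" and WS: "W S \<le> c" using S by (auto simp: E_def)
      have gm: "(\<lambda>\<theta>. gen_gap n D loss A S \<theta>) \<in> borel_measurable P"
      proof -
        have "(\<lambda>\<theta>. (S, \<theta>)) \<in> measurable P (?Pn \<Otimes>\<^sub>M P)" using Sp by measurable
        from measurable_compose[OF this F.Phi_meas] show ?thesis by simp
      qed
      have "(\<integral>\<theta>. gen_gap n D loss A S \<theta> \<partial>Q) \<le> sqrt ((real_of_ereal (chi_square Q P) + 1) * c)"
        by (rule pac_step[OF P _ _ _ gm F.gap_bnd[OF n0] _ cp]) (use Qc WS in \<open>auto simp: W_def\<close>)
      also have "(real_of_ereal (chi_square Q P) + 1) * c = (real_of_ereal (chi_square Q P) + 1) / \<delta> * (2 * M\<^sup>2 / real n + 12 * M * \<beta>)"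
        unfolding c_def B_def by simp
      finally show "gen_gap_post n D loss A S Q \<le> sqrt ((real_of_ereal (chi_square Q P) + 1) / \<delta> * (2 * M\<^sup>2 / real n + 12 * M * \<beta>))"
        by (simp add: gen_gap_post_def)
    qed
  qed
qed


end
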